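(* Let $\{x_k\}_{k\in[n]}$ be unit vectors in $\mathbb{H}^d$ and let $S(x_k)=\{x_kzx_k^*:z\in\mathbb{H},\operatorname{Re}z=0\}$, a $3$-dimensional real subspace of the real vector space $\mathcal{A}_d$ of $d\times d$ quaternionic anti-Hermitian matrices (which has dimension $d(2d+1)$), equipped with $\langle A,B\rangle=\operatorname{Re}\operatorname{tr}(A^*B)$. (a) If $\{x_k\}_{k\in[n]}$ is equiangular, then $\{S(x_k)\}_{k\in[n]}$ is equi-isoclinic. (b) If $\{x_k\}_{k\in[n]}$ is a projective $2$-design for $\mathbb{H}^d$, then $\{S(x_k)\}_{k\in[n]}$ is a tight fusion frame for $\mathcal{A}_d$.
   Context: $\mathbb{H}$ is the quaternions; $x^*$ is conjugate transpose; unit means $x^*x=1$. On $\mathbb{H}^{d\times d}$ use the real inner product $\langle A,B\rangle=\operatorname{Re}\operatorname{tr}(A^*B)$. Unit vectors $\{x_k\}$ are equiangular if $|x_k^*x_\ell|^2$ takes the same value for all $k\neq\ell$. They form a projective $2$-design for $\mathbb{H}^d$ if $\frac{1}{n^2}\sum_{k,\ell}\langle x_kx_k^*,x_\ell x_\ell^*\rangle=\frac{1}{d}$ and $\frac{1}{n^2}\sum_{k,\ell}\langle x_kx_k^*,x_\ell x_\ell^*\rangle^2=\frac{3}{d(2d+1)}$. For $r$-dimensional subspaces $\{S_k\}_{k\in[n]}$ of a real inner product space $V$, choose orthonormal bases $\{y_{ki}\}_{i\in[r]}$ of $S_k$ and set $G_{k\ell}=[\langle y_{ki},y_{\ell j}\rangle]_{i,j\in[r]}$.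 The family is equi-isoclinic if there is $\alpha\ge0$ with $G_{k\ell}^*G_{k\ell}=\alpha I_r$ for all $k\ne\ell$; it is a tight fusion frame for $V$ if $\frac{1}{n^2}\sum_{k,\ell}\|G_{k\ell}\|_F^2=\frac{r^2}{\dim V}$. *)

theory Defs
  imports "HOL-Analysis.Analysis"
begin

datatype quat = Quat (Re_q: real) (Im_i: real) (Im_j: real) (Im_k: real)

lemma quat_eqI: "Re_q p = Re_q q \<Longrightarrow> Im_i p = Im_i q \<Longrightarrow> Im_j p = Im_j q \<Longrightarrow> Im_k p = Im_k q \<Longrightarrow> p = q"
  by (cases p, cases q) simp

instantiation quat :: ring_1
begin
definition "0 = Quat 0 0 0 0"
definition "1 = Quat 1 0 0 0"
definition "p + q = Quat (Re_q p + Re_q q) (Im_i p + Im_i q) (Im_j p + Im_j q) (Im_k p + Im_k q)"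
definition "p - q = Quat (Re_q p - Re_q q) (Im_i p - Im_i q) (Im_j p - Im_j q) (Im_k p - Im_k q)"
definition "- q = Quat (- Re_q q) (- Im_i q) (- Im_j q) (- Im_k q)"
definition "p * q = Quat
   (Re_q p * Re_q q - Im_i p * Im_i q - Im_j p * Im_j q - Im_k p * Im_k q)
   (Re_q p * Im_i q + Im_i p * Re_q q + Im_j p * Im_k q - Im_k p * Im_j q)
   (Re_q p * Im_j q - Im_i p * Im_k q + Im_j p * Re_q q + Im_k p * Im_i q)
   (Re_q p * Im_k q + Im_i p * Im_j q - Im_j p * Im_i q + Im_k p * Re_q q)"
instance
  by standard (auto intro!: quat_eqI simp: zero_quat_def one_quat_def plus_quat_def
      minus_quat_def uminus_quat_def times_quat_def algebra_simps)
end

instantiation quat :: real_vector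
begin
definition "scaleR r q = Quat (r * Re_q q) (r * Im_i q) (r * Im_j q) (r * Im_k q)"
instance
  by standard (auto intro!: quat_eqI simp: scaleR_quat_def plus_quat_def algebra_simps)
end

definition qcnj :: "quat \<Rightarrow> quat" where
  "qcnj q = Quat (Re_q q) (- Im_i q) (- Im_j q) (- Im_k q)"

definition qnorm2 :: "quat \<Rightarrow> real" where
  "qnorm2 q = (Re_q q)\<^sup>2 + (Im_i q)\<^sup>2 + (Im_j q)\<^sup>2 + (Im_k q)\<^sup>2"

definition hinner :: "quat^'d \<Rightarrow> quat^'d \<Rightarrow> quat" where
  "hinner x y = (\<Sum>i\<in>UNIV. qcnj (x $ i) * y $ i)"

definition unit_vec :: "quat^'d \<Rightarrow> bool" where
  "unit_vec x \<longleftrightarrow> hinner x x = 1"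

definition adj :: "quat^'d^'d \<Rightarrow> quat^'d^'d" where
  "adj A = (\<chi> i j. qcnj (A $ j $ i))"

definition mtrace :: "quat^'d^'d \<Rightarrow> quat" where
  "mtrace A = (\<Sum>i\<in>UNIV. A $ i $ i)"

definition minner :: "quat^'d^'d \<Rightarrow> quat^'d^'d \<Rightarrow> real" where
  "minner A B = Re_q (mtrace (adj A ** B))"

definition outer :: "quat^'d \<Rightarrow> quat \<Rightarrow> quat^'d \<Rightarrow> quat^'d^'d" where
  "outer x z y = (\<chi> i j. x $ i * z * qcnj (y $ j))"

definition proj :: "quat^'d \<Rightarrow> quat^'d^'d" where
  "proj x = outer x 1 x"

definition antiherm :: "(quat^'d^'d) set" where
  "antiherm = {A. adj A = - A}"

definition Ssub :: "quat^'d \<Rightarrow> (quat^'d^'d) set" where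
  "Ssub x = {outer x z x | z. Re_q z = 0}"

definition equiangular :: "nat \<Rightarrow> (nat \<Rightarrow> quat^'d) \<Rightarrow> bool" where
  "equiangular n x \<longleftrightarrow> (\<exists>c. \<forall>k<n. \<forall>l<n. k \<noteq> l \<longrightarrow> qnorm2 (hinner (x k) (x l)) = c)"

definition proj_2design :: "nat \<Rightarrow> (nat \<Rightarrow> quat^'d) \<Rightarrow> bool" where
  "proj_2design n x \<longleftrightarrow>
     (1 / (real n)\<^sup>2) * (\<Sum>k<n. \<Sum>l<n. minner (proj (x k)) (proj (x l))) = 1 / real CARD('d) \<and>
     (1 / (real n)\<^sup>2) * (\<Sum>k<n. \<Sum>l<n. (minner (proj (x k)) (proj (x l)))\<^sup>2)
        = 3 / (real CARD('d) * (2 * real CARD('d) + 1))"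

definition onb_family :: "('v::real_vector \<Rightarrow> 'v \<Rightarrow> real) \<Rightarrow> nat \<Rightarrow> nat \<Rightarrow> (nat \<Rightarrow> 'v set)
    \<Rightarrow> (nat \<Rightarrow> nat \<Rightarrow> 'v) \<Rightarrow> bool" where
  "onb_family ip r n S y \<longleftrightarrow> (\<forall>k<n.
      (\<forall>i<r. y k i \<in> S k) \<and>
      (\<forall>i<r. \<forall>j<r. ip (y k i) (y k j) = (if i = j then 1 else 0)) \<and>
      span {y k i | i. i < r} = S k)"

definition gram_blk :: "('v \<Rightarrow> 'v \<Rightarrow> real) \<Rightarrow> (nat \<Rightarrow> nat \<Rightarrow> 'v) \<Rightarrow> nat \<Rightarrow> nat \<Rightarrow> nat \<Rightarrow> nat \<Rightarrow> real" where
  "gram_blk ip y k l i j = ip (y k i) (y l j)"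

definition subspace_family :: "'v::real_vector set \<Rightarrow> nat \<Rightarrow> nat \<Rightarrow> (nat \<Rightarrow> 'v set) \<Rightarrow> bool" where
  "subspace_family V r n S \<longleftrightarrow> (\<forall>k<n. subspace (S k) \<and> S k \<subseteq> V \<and> dim (S k) = r)"

text \<open>Equi-isoclinic: for (any) choice of orthonormal bases, G_{kl}^* G_{kl} = \<alpha> I_r for k \<noteq> l.
  (The condition does not depend on the choice of bases.)\<close>
definition equi_isoclinic :: "'v::real_vector set \<Rightarrow> ('v \<Rightarrow> 'v \<Rightarrow> real) \<Rightarrow> nat \<Rightarrow> nat \<Rightarrow> (nat \<Rightarrow> 'v set) \<Rightarrow> bool" where
  "equi_isoclinic V ip r n S \<longleftrightarrow> subspace_family V r n S \<and>
     (\<forall>y. onb_family ip r n S y \<longrightarrow>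
        (\<exists>\<alpha>\<ge>0. \<forall>k<n. \<forall>l<n. k \<noteq> l \<longrightarrow>
           (\<forall>i<r. \<forall>j<r. (\<Sum>m<r. gram_blk ip y k l m i * gram_blk ip y k l m j)
                           = (if i = j then \<alpha> else 0))))"

definition tight_fusion_frame :: "'v::real_vector set \<Rightarrow> ('v \<Rightarrow> 'v \<Rightarrow> real) \<Rightarrow> nat \<Rightarrow> nat \<Rightarrow> (nat \<Rightarrow> 'v set) \<Rightarrow> bool" where
  "tight_fusion_frame V ip r n S \<longleftrightarrow> subspace_family V r n S \<and>
     (\<forall>y. onb_family ip r n S y \<longrightarrow>
        (1 / (real n)\<^sup>2) * (\<Sum>k<n. \<Sum>l<n. \<Sum>i<r. \<Sum>j<r. (gram_blk ip y k l i j)\<^sup>2)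
          = (real r)\<^sup>2 / real (dim V))"

end

theory Submission
  imports Defs
begin


lemma quat_simps[simp]:
  "Re_q 0 = 0" "Im_i 0 = 0" "Im_j 0 = 0" "Im_k 0 = 0"
  "Re_q 1 = 1" "Im_i 1 = 0" "Im_j 1 = 0" "Im_k 1 = 0"
  "Re_q (p+q) = Re_q p + Re_q q" "Im_i (p+q) = Im_i p + Im_i q" "Im_j (p+q) = Im_j p + Im_j q" "Im_k (p+q) = Im_k p + Im_k q"
  "Re_q (p-q) = Re_q p - Re_q q" "Im_i (p-q) = Im_i p - Im_i q" "Im_j (p-q) = Im_j p - Im_j q" "Im_k (p-q) = Im_k p - Im_k q"
  "Re_q (-q) = - Re_q q" "Im_i (-q) = - Im_i q" "Im_j (-q) = - Im_j q" "Im_k (-q) = - Im_k q"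
  "Re_q (r *\<^sub>R q) = r * Re_q q" "Im_i (r *\<^sub>R q) = r * Im_i q" "Im_j (r *\<^sub>R q) = r * Im_j q" "Im_k (r *\<^sub>R q) = r * Im_k q"
  "Re_q (qcnj q) = Re_q q" "Im_i (qcnj q) = - Im_i q" "Im_j (qcnj q) = - Im_j q" "Im_k (qcnj q) = - Im_k q"
  by (simp_all add: zero_quat_def one_quat_def plus_quat_def minus_quat_def uminus_quat_def scaleR_quat_def qcnj_def)

lemma qmult:
  "Re_q (p * q) = Re_q p * Re_q q - Im_i p * Im_i q - Im_j p * Im_j q - Im_k p * Im_k q"
  "Im_i (p * q) = Re_q p * Im_i q + Im_i p * Re_q q + Im_j p * Im_k q - Im_k p * Im_j q"
  "Im_j (p * q) = Re_q p * Im_j q - Im_i p * Im_k q + Im_j p * Re_q q + Im_k p * Im_i q"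
  "Im_k (p * q) = Re_q p * Im_k q + Im_i p * Im_j q - Im_j p * Im_i q + Im_k p * Re_q q"
  by (simp_all add: times_quat_def)

lemma quat_eq_iff: "p = q \<longleftrightarrow> Re_q p = Re_q q \<and> Im_i p = Im_i q \<and> Im_j p = Im_j q \<and> Im_k p = Im_k q"
  using quat_eqI by blast

lemma Re_q_sum: "Re_q (sum f A) = (\<Sum>a\<in>A. Re_q (f a))"
  by (induction A rule: infinite_finite_induct) auto


lemma qcnj_mult: "qcnj (p * q) = qcnj q * qcnj p"
  by (rule quat_eqI) (simp_all add: qmult algebra_simps)
lemma qcnj_qcnj[simp]: "qcnj (qcnj p) = p"
  by (rule quat_eqI) simp_all
lemma qcnj_add: "qcnj (p + q) = qcnj p + qcnj q" by (rule quat_eqI) simp_all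
lemma qcnj_0[simp]: "qcnj 0 = 0" and qcnj_1[simp]: "qcnj 1 = 1" by (rule quat_eqI; simp)+
lemma qcnj_sum: "qcnj (sum f A) = (\<Sum>a\<in>A. qcnj (f a))"
  by (induction A rule: infinite_finite_induct) (simp_all add: qcnj_add)
lemma qcnj_scaleR: "qcnj (r *\<^sub>R p) = r *\<^sub>R qcnj p" by (rule quat_eqI) simp_all
lemma qcnj_minus: "qcnj (- p) = - qcnj p" by (rule quat_eqI) simp_all

lemma Re_mult_comm: "Re_q (p * q) = Re_q (q * p)"
  by (simp add: qmult algebra_simps)

lemma scaleR_mult_left: "(r *\<^sub>R p) * q = r *\<^sub>R (p * (q::quat))"
  by (rule quat_eqI) (simp_all add: qmult algebra_simps)
lemma scaleR_mult_right: "p * (r *\<^sub>R q) = r *\<^sub>R (p * (q::quat))"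
  by (rule quat_eqI) (simp_all add: qmult algebra_simps)

lemma qcnj_mult_self: "qcnj p * p = qnorm2 p *\<^sub>R 1"
  by (rule quat_eqI) (simp_all add: qmult qnorm2_def power2_eq_square algebra_simps)
lemma mult_qcnj_self: "p * qcnj p = qnorm2 p *\<^sub>R 1"
  by (rule quat_eqI) (simp_all add: qmult qnorm2_def power2_eq_square algebra_simps)

definition ip :: "quat \<Rightarrow> quat \<Rightarrow> real" where "ip p q = Re_q (qcnj p * q)"

lemma ip_comp: "ip p q = Re_q p * Re_q q + Im_i p * Im_i q + Im_j p * Im_j q + Im_k p * Im_k q"
  by (simp add: ip_def qmult)

lemma pure_qcnj: "Re_q z = 0 \<Longrightarrow> qcnj z = - z"
  by (rule quat_eqI) simp_all

lemma Re_conj3: "Re_q (a * w * qcnj a) = qnorm2 a * Re_q w"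
proof -
  have "Re_q (a * w * qcnj a) = Re_q (qcnj a * (a * w))" by (metis Re_mult_comm mult.assoc)
  also have "\<dots> = Re_q ((qcnj a * a) * w)" by (simp add: mult.assoc)
  finally show ?thesis by (simp add: qcnj_mult_self scaleR_mult_left)
qed

lemma ip_conj3: "ip (a * w * qcnj a) (a * v * qcnj a) = (qnorm2 a)\<^sup>2 * ip w v"
proof -
  have "ip (a * w * qcnj a) (a * v * qcnj a) = Re_q (a * qcnj w * qcnj a * (a * v * qcnj a))"
    by (simp add: ip_def qcnj_mult mult.assoc)
  also have "a * qcnj w * qcnj a * (a * v * qcnj a) = a * qcnj w * (qcnj a * a) * v * qcnj a"
    by (simp add: mult.assoc)
  also have "\<dots> = qnorm2 a *\<^sub>R (a * (qcnj w * v) * qcnj a)"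
    by (simp add: qcnj_mult_self scaleR_mult_left scaleR_mult_right mult.assoc)
  finally show ?thesis
    by (simp add: Re_conj3 ip_def power2_eq_square)
qed

lemma ip_add_right: "ip p (q + r) = ip p q + ip p r"
  and ip_diff_right: "ip p (q - r) = ip p q - ip p r"
  and ip_scaleR_right: "ip p (c *\<^sub>R q) = c * ip p q"
  and ip_zero_right: "ip p 0 = 0"
  and ip_sym: "ip p q = ip q p"
  by (simp_all add: ip_comp algebra_simps)

lemma minner_sum: "minner A B = (\<Sum>i\<in>UNIV. \<Sum>j\<in>UNIV. ip (A$i$j) (B$i$j))"
proof -
  have "minner A B = (\<Sum>i\<in>UNIV. \<Sum>j\<in>UNIV. ip (A$j$i) (B$j$i))"
    by (simp add: minner_def mtrace_def adj_def matrix_matrix_mult_def Re_q_sum ip_def)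
  also have "\<dots> = (\<Sum>i\<in>UNIV. \<Sum>j\<in>UNIV. ip (A$i$j) (B$i$j))"
    by (rule sum.swap)
  finally show ?thesis .
qed

lemma minner_add_right: "minner A (B + C) = minner A B + minner A C"
  and minner_diff_right: "minner A (B - C) = minner A B - minner A C"
  and minner_scaleR_right: "minner A (c *\<^sub>R B) = c * minner A B"
  and minner_zero_right: "minner A 0 = 0"
  and minner_sym: "minner A B = minner B A"
  by (simp_all add: minner_sum ip_add_right ip_diff_right ip_scaleR_right ip_zero_right
      sum.distrib sum_subtractf sum_distrib_left ip_sym[of "A$i$j" for i j])

lemma minner_sum_right: "minner A (sum f S) = (\<Sum>s\<in>S. minner A (f s))"
  by (induction S rule: infinite_finite_induct) (simp_all add: minner_zero_right minner_add_right)

lemma dim_orth: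
  fixes W :: "(quat^'d^'d) set" and B
  assumes sub: "subspace W" and fin: "finite B" and BW: "B \<subseteq> W"
   and orth: "\<And>b c. b\<in>B \<Longrightarrow> c\<in>B \<Longrightarrow> b\<noteq>c \<Longrightarrow> minner b c = 0"
   and nz: "\<And>b. b\<in>B \<Longrightarrow> minner b b \<noteq> 0"
   and nd: "\<And>A. A\<in>W \<Longrightarrow> (\<And>b. b\<in>B \<Longrightarrow> minner b A = 0) \<Longrightarrow> A = 0"
  shows "dim W = card B"
proof -
  have key: "minner v (\<Sum>u\<in>B. c u *\<^sub>R u) = c v * minner v v" if "v \<in> B" for c v
  proof -
    have "minner v (\<Sum>u\<in>B. c u *\<^sub>R u) = (\<Sum>u\<in>B. c u * minner v u)"
      by (simp add: minner_sum_right minner_scaleR_right)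
    also have "\<dots> = (\<Sum>u\<in>B. if u = v then c v * minner v v else 0)"
      by (rule sum.cong) (use orth that in auto)
    also have "\<dots> = c v * minner v v" using that fin by simp
    finally show ?thesis .
  qed
  have ind: "independent B"
  proof
    assume "dependent B"
    then obtain c v where "v \<in> B" "c v \<noteq> 0" "(\<Sum>v\<in>B. c v *\<^sub>R v) = 0"
      unfolding real_vector.dependent_finite[OF fin] by blast
    then have "c v * minner v v = 0" using key[of v c] by (simp add: minner_zero_right)
    then show False using nz[OF \<open>v\<in>B\<close>] \<open>c v \<noteq> 0\<close> by simp
  qed
  have "span B \<subseteq> W" using BW sub by (simp add: real_vector.span_minimal)
  moreover have "W \<subseteq> span B"
  proof
    fix A assume A: "A \<in> W"
    define C where "C = A - (\<Sum>b\<in>B. (minner b A / minner b b) *\<^sub>R b)"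
    have "(\<Sum>b\<in>B. (minner b A / minner b b) *\<^sub>R b) \<in> W"
      by (rule real_vector.subspace_sum[OF sub]) (use BW in \<open>auto intro: real_vector.subspace_scale[OF sub]\<close>)
    then have "C \<in> W" unfolding C_def using A sub by (simp add: real_vector.subspace_diff)
    moreover have "minner b C = 0" if "b \<in> B" for b
      unfolding C_def minner_diff_right using key[OF that, of "\<lambda>b. minner b A / minner b b"] nz[OF that]
      by simp
    ultimately have "C = 0" using nd by blast
    then have "A = (\<Sum>b\<in>B. (minner b A / minner b b) *\<^sub>R b)" unfolding C_def by simp
    also have "\<dots> \<in> span B"
      by (intro real_vector.span_sum real_vector.span_scale real_vector.span_base)
    finally show "A \<in> span B" .
  qed
  ultimately have "span B = W" by blast
  then have "dim W = dim B" using real_vector.dim_span by metis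
  then show ?thesis using real_vector.dim_eq_card_independent[OF ind] by simp
qed

lemma outer_nth[simp]: "outer x z y $ i $ j = x$i * z * qcnj (y$j)"
  by (simp add: outer_def)

lemma hinner_swap: "hinner y x = qcnj (hinner x y)"
  by (simp add: hinner_def qcnj_sum qcnj_mult)

lemma minner_outer:
  "minner (outer x z x) (outer y w y) = Re_q (qcnj (hinner x y) * qcnj z * hinner x y * w)"
proof -
  have t: "Re_q (qcnj(x$i*z*qcnj(x$j)) * (y$i*w*qcnj(y$j))) =
           Re_q (qcnj (y$j) * x$j * qcnj z * (qcnj(x$i) * y$i) * w)" for i j
  proof -
    have "Re_q (qcnj(x$i*z*qcnj(x$j)) * (y$i*w*qcnj(y$j))) =
          Re_q ((x$j * qcnj z * qcnj (x$i) * y$i * w) * qcnj(y$j))"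
      by (simp add: qcnj_mult mult.assoc)
    also have "\<dots> = Re_q (qcnj(y$j) * (x$j * qcnj z * qcnj (x$i) * y$i * w))"
      by (rule Re_mult_comm)
    finally show ?thesis by (simp add: mult.assoc)
  qed
  have "minner (outer x z x) (outer y w y) =
        (\<Sum>i\<in>UNIV. \<Sum>j\<in>UNIV. Re_q (qcnj (y$j) * x$j * qcnj z * (qcnj(x$i) * y$i) * w))"
    by (simp add: minner_sum ip_def t)
  also have "\<dots> = (\<Sum>j\<in>UNIV. \<Sum>i\<in>UNIV. Re_q (qcnj (y$j) * x$j * qcnj z * (qcnj(x$i) * y$i) * w))"
    by (rule sum.swap)
  also have "\<dots> = Re_q ((\<Sum>j\<in>UNIV. \<Sum>i\<in>UNIV. qcnj (y$j) * x$j * qcnj z * (qcnj(x$i) * y$i)) * w)"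
    by (simp add: Re_q_sum sum_distrib_right)
  also have "(\<Sum>j\<in>UNIV. \<Sum>i\<in>UNIV. qcnj (y$j) * x$j * qcnj z * (qcnj(x$i) * y$i))
     = (\<Sum>j\<in>UNIV. qcnj (y$j) * x$j) * qcnj z * hinner x y"
    by (simp add: hinner_def sum_distrib_left sum_distrib_right) (rule sum.swap)
  also have "(\<Sum>j\<in>UNIV. qcnj (y$j) * x$j) = qcnj (hinner x y)"
    by (metis hinner_def hinner_swap)
  finally show ?thesis .
qed

lemma minner_outer_same:
  assumes "unit_vec x"
  shows "minner (outer x z x) (outer x w x) = ip z w"
  using assms by (simp add: minner_outer unit_vec_def ip_def)

lemma outer_add: "outer x (z + w) y = outer x z y + outer x w y"
  by (simp add: vec_eq_iff distrib_left distrib_right)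
lemma outer_scaleR: "outer x (c *\<^sub>R z) y = c *\<^sub>R outer x z y"
  by (simp add: vec_eq_iff scaleR_mult_left scaleR_mult_right)
lemma outer_zero: "outer x 0 y = 0"
  by (simp add: vec_eq_iff)

lemma subspace_Ssub: "subspace (Ssub x)"
  unfolding real_vector.subspace_def Ssub_def
proof (intro conjI ballI allI)
  show "0 \<in> {outer x z x |z. Re_q z = 0}" by (rule CollectI, rule exI[of _ 0]) (simp add: outer_zero)
next
  fix A B assume "A \<in> {outer x z x |z. Re_q z = 0}" "B \<in> {outer x z x |z. Re_q z = 0}"
  then obtain z w where "A = outer x z x" "Re_q z = 0" "B = outer x w x" "Re_q w = 0" by blast
  then show "A + B \<in> {outer x z x |z. Re_q z = 0}" by (auto simp: outer_add[symmetric] intro!: exI[of _ "z+w"])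
next
  fix c and A assume "A \<in> {outer x z x |z. Re_q z = 0}"
  then obtain z where "A = outer x z x" "Re_q z = 0" by blast
  then show "c *\<^sub>R A \<in> {outer x z x |z. Re_q z = 0}" by (auto simp: outer_scaleR[symmetric] intro!: exI[of _ "c *\<^sub>R z"])
qed

lemma adj_outer: "adj (outer x z x) = outer x (qcnj z) x"
  by (simp add: adj_def vec_eq_iff qcnj_mult mult.assoc)

lemma outer_minus: "outer x (- z) x = - outer x z x"
  by (simp add: vec_eq_iff)

lemma Ssub_antiherm: "Ssub x \<subseteq> antiherm"
  by (auto simp: Ssub_def antiherm_def adj_outer pure_qcnj outer_minus)

definition "qi = Quat 0 1 0 0"
definition "qj = Quat 0 0 1 0"
definition "qk = Quat 0 0 0 1"

lemma dim_Ssub: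
  assumes u: "unit_vec x"
  shows "dim (Ssub x) = 3"
proof -
  define B where "B = {outer x qi x, outer x qj x, outer x qk x}"
  have m: "minner (outer x a x) (outer x b x) = ip a b" for a b using minner_outer_same[OF u] .
  have ne: "outer x qi x \<noteq> outer x qj x" "outer x qi x \<noteq> outer x qk x" "outer x qj x \<noteq> outer x qk x"
    using m[of qi qi] m[of qi qj] m[of qi qk] m[of qj qj] m[of qj qk]
    by (auto simp: ip_comp qi_def qj_def qk_def)
  have "dim (Ssub x) = card B"
  proof (rule dim_orth[OF subspace_Ssub])
    show "finite B" by (simp add: B_def)
    show "B \<subseteq> Ssub x" by (auto simp: B_def Ssub_def qi_def qj_def qk_def)
    show "minner b c = 0" if "b \<in> B" "c \<in> B" "b \<noteq> c" for b c
      using that by (auto simp: B_def m ip_comp qi_def qj_def qk_def)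
    show "minner b b \<noteq> 0" if "b \<in> B" for b
      using that by (auto simp: B_def m ip_comp qi_def qj_def qk_def)
    show "A = 0" if "A \<in> Ssub x" "\<And>b. b \<in> B \<Longrightarrow> minner b A = 0" for A
    proof -
      obtain z where z: "A = outer x z x" "Re_q z = 0" using \<open>A \<in> Ssub x\<close> by (auto simp: Ssub_def)
      have "ip qi z = 0" "ip qj z = 0" "ip qk z = 0" using that(2)[of "outer x qi x"] that(2)[of "outer x qj x"]
        that(2)[of "outer x qk x"] by (auto simp: B_def z m)
      then have "z = 0" using z(2) by (intro quat_eqI) (auto simp: ip_comp qi_def qj_def qk_def)
      then show ?thesis using z by (simp add: outer_zero)
    qed
  qed
  also have "card B = 3" using ne by (simp add: B_def)
  finally show ?thesis .
qed



definition uq :: "nat \<Rightarrow> quat" where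
  "uq q = (if q = 0 then 1 else if q = 1 then qi else if q = 2 then qj else qk)"

lemma lt4: "(q::nat) < 4 \<Longrightarrow> q = 0 \<or> q = 1 \<or> q = 2 \<or> q = 3" by auto

lemma ip_uq: "q < 4 \<Longrightarrow> q' < 4 \<Longrightarrow> ip (uq q) (uq q') = (if q = q' then 1 else 0)"
  by (drule lt4, drule lt4) (auto simp: uq_def ip_comp qi_def qj_def qk_def)

lemma ip_uq_cnj: "q < 4 \<Longrightarrow> q' < 4 \<Longrightarrow>
   ip (uq q) (qcnj (uq q')) = (if q = q' then (if q = 0 then 1 else -1) else 0)"
  by (drule lt4, drule lt4) (auto simp: uq_def ip_comp qi_def qj_def qk_def)

lemma ip_uq_comp: "ip (uq 0) w = Re_q w" "ip (uq 1) w = Im_i w" "ip (uq 2) w = Im_j w" "ip (uq 3) w = Im_k w"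
  by (auto simp: uq_def ip_comp qi_def qj_def qk_def)

definition single :: "'d \<Rightarrow> 'd \<Rightarrow> quat \<Rightarrow> quat^'d^'d" where
  "single a b v = (\<chi> i j. if i = a \<and> j = b then v else 0)"

lemma ip_if_left: "ip (if P then v else 0) w = (if P then ip v w else 0)"
  by (simp add: ip_def)

lemma sum_if_out: "(\<Sum>j\<in>S. if P then f j else 0) = (if P then (\<Sum>j\<in>S. f j) else 0)"
  by (cases P) simp_all

lemma minner_single: "minner (single a b v) B = ip v (B$a$b)"
proof -
  have e: "(if i = a \<and> j = b then v else 0) = (if i = a then (if j = b then v else 0) else 0)" for i j
    by simp
  show ?thesis
    unfolding minner_sum single_def vec_lambda_beta e ip_if_left
    by (simp add: sum_if_out)
qed

lemma minner_diff_left: "minner (A - A') B = minner A B - minner A' B"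
  by (metis minner_sym minner_diff_right)

lemma qcnj_diff: "qcnj (p - q) = qcnj p - qcnj q" by (rule quat_eqI) simp_all

definition Eb :: "('d \<times> 'd) \<times> nat \<Rightarrow> quat^'d^'d" where
  "Eb p = (case p of ((a,b),q) \<Rightarrow> single a b (uq q) - single b a (qcnj (uq q)))"

lemma Eb_nth: "Eb ((a,b),q) $ i $ j = (if i = a \<and> j = b then uq q else 0) - (if i = b \<and> j = a then qcnj (uq q) else 0)"
  by (simp add: Eb_def single_def)

lemma Eb_antiherm: "Eb p \<in> antiherm"
proof -
  obtain a b q where p: "p = ((a,b),q)" by (metis prod.collapse)
  have "qcnj (Eb ((a,b),q) $ j $ i) = - (Eb ((a,b),q) $ i $ j)" for i j
    by (cases "i = a"; cases "j = b"; cases "i = b"; cases "j = a") (simp_all add: Eb_nth qcnj_diff qcnj_minus)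
  then show ?thesis unfolding antiherm_def p
    by (simp add: vec_eq_iff adj_def)
qed

lemma antiherm_nth: "B \<in> antiherm \<Longrightarrow> B$b$a = - qcnj (B$a$b)"
proof -
  assume "B \<in> antiherm"
  then have "adj B $ a $ b = - B $ a $ b" by (simp add: antiherm_def)
  then have "qcnj (B$b$a) = - B$a$b" by (simp add: adj_def)
  then have "qcnj (qcnj (B$b$a)) = qcnj (- B$a$b)" by simp
  then show ?thesis by (simp add: qcnj_minus)
qed

lemma minner_Eb: "B \<in> antiherm \<Longrightarrow> minner (Eb ((a,b),q)) B = 2 * ip (uq q) (B$a$b)"
  by (simp add: Eb_def minner_diff_left minner_single antiherm_nth[of B a b] ip_comp)



lemma ip_uq1: "ip (uq (Suc 0)) w = Im_i w" using ip_uq_comp(2) by simp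

lemma ip_if_right: "ip v (if P then w else 0) = (if P then ip v w else 0)"
  by (simp add: ip_zero_right)

lemma minner_Eb_Eb:
  fixes f :: "'d::finite \<Rightarrow> nat"
  assumes I: "\<And>a b q. ((a,b),q) \<in> I \<Longrightarrow> (f a < f b \<and> q < 4) \<or> (a = b \<and> 1 \<le> q \<and> q < 4)"
    and p: "((a,b),q) \<in> I" and p': "((a',b'),q') \<in> I"
  shows "minner (Eb ((a,b),q)) (Eb ((a',b'),q')) = (if ((a,b),q) = ((a',b'),q') then (if a = b then 4 else 2) else 0)"
proof -
  have q: "q < 4" "q' < 4" using I[OF p] I[OF p'] by auto
  have m: "minner (Eb ((a,b),q)) (Eb ((a',b'),q')) =
     2 * ((if a = a' \<and> b = b' then ip (uq q) (uq q') else 0) - (if a = b' \<and> b = a' then ip (uq q) (qcnj (uq q')) else 0))"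
    by (simp add: minner_Eb[OF Eb_antiherm] Eb_nth ip_diff_right ip_if_right)
  show ?thesis
  proof (cases "a = a' \<and> b = b'")
    case True
    show ?thesis
    proof (cases "a = b")
      case True
      then have "q \<ge> 1" using I[OF p] by auto
      then show ?thesis using m \<open>a = a' \<and> b = b'\<close> True q by (auto simp: ip_uq ip_uq_cnj)
    next
      case False
      then show ?thesis using m \<open>a = a' \<and> b = b'\<close> q by (auto simp: ip_uq)
    qed
  next
    case False
    have nb: "\<not> (a = b' \<and> b = a')"
    proof
      assume h: "a = b' \<and> b = a'"
      then have "a \<noteq> b" using False by auto
      then have "f a < f b" using I[OF p] by auto
      moreover have "a' \<noteq> b'" using h \<open>a \<noteq> b\<close> by auto
      then have "f a' < f b'" using I[OF p'] by auto
      ultimately show False using h by auto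
    qed
    have m0: "minner (Eb ((a,b),q)) (Eb ((a',b'),q')) = 0"
      unfolding m if_not_P[OF False] if_not_P[OF nb] by simp
    have ne: "((a,b),q) \<noteq> ((a',b'),q')" using False by auto
    show ?thesis unfolding m0 if_not_P[OF ne] by simp
  qed
qed

lemma subspace_antiherm: "subspace (antiherm :: (quat^'d^'d) set)"
  unfolding real_vector.subspace_def antiherm_def
  by (auto simp: vec_eq_iff adj_def qcnj_add qcnj_scaleR)

lemma dim_antiherm: "dim (antiherm :: (quat^'d^'d) set) = CARD('d) * (2 * CARD('d) + 1)"
proof -
  obtain h :: "'d \<Rightarrow> nat" where "bij_betw h UNIV {0..<card (UNIV::'d set)}"
    using ex_bij_betw_finite_nat[of "UNIV :: 'd set"] by auto
  then have f: "inj h" by (simp add: bij_betw_imp_inj_on)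
  define P :: "('d \<times> 'd) set" where "P = {(a,b). h a < h b}"
  define D :: "('d \<times> 'd) set" where "D = (\<lambda>a. (a,a)) ` UNIV"
  define I where "I = P \<times> {..<4::nat} \<union> D \<times> {1..<4}"
  have Imem: "(h a < h b \<and> q < 4) \<or> (a = b \<and> 1 \<le> q \<and> q < 4)" if "((a,b),q) \<in> I" for a b q
    using that by (auto simp: I_def P_def D_def)
  have finI: "finite I" by (simp add: I_def)
  have orth: "minner (Eb p) (Eb p') = (if p = p' then (if fst (fst p) = snd (fst p) then 4 else 2) else 0)"
    if "p \<in> I" "p' \<in> I" for p p'
  proof -
    obtain a b q where "p = ((a,b),q)" by (metis prod.collapse)
    moreover obtain a' b' q' where "p' = ((a',b'),q')" by (metis prod.collapse)
    ultimately show ?thesis using minner_Eb_Eb[of I h, OF Imem] that by simp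
  qed
  have inj: "inj_on Eb I"
  proof (rule inj_onI)
    fix p p' assume "p \<in> I" "p' \<in> I" "Eb p = Eb p'"
    then have "minner (Eb p) (Eb p) = minner (Eb p) (Eb p')" by simp
    then show "p = p'" using orth[OF \<open>p\<in>I\<close> \<open>p\<in>I\<close>] orth[OF \<open>p\<in>I\<close> \<open>p'\<in>I\<close>]
      by (auto split: if_splits)
  qed
  have "dim (antiherm :: (quat^'d^'d) set) = card (Eb ` I)"
  proof (rule dim_orth[OF subspace_antiherm])
    show "finite (Eb ` I)" using finI by simp
    show "Eb ` I \<subseteq> antiherm" using Eb_antiherm by auto
    show "minner b c = 0" if "b \<in> Eb ` I" "c \<in> Eb ` I" "b \<noteq> c" for b c
      using that orth by auto
    show "minner b b \<noteq> 0" if "b \<in> Eb ` I" for b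
      using that orth by (auto split: if_splits)
    show "A = 0" if A: "A \<in> antiherm" "\<And>b. b \<in> Eb ` I \<Longrightarrow> minner b A = 0" for A
    proof -
      have z: "ip (uq q) (A$a$b) = 0" if "((a,b),q) \<in> I" for a b q
        using A(2)[of "Eb ((a,b),q)"] that minner_Eb[OF A(1)] by auto
      have "A$a$b = 0" for a b
      proof (cases "h a < h b")
        case True
        then have "((a,b),q) \<in> I" if "q < 4" for q using that by (auto simp: I_def P_def)
        then have "ip (uq 0) (A$a$b) = 0" "ip (uq 1) (A$a$b) = 0" "ip (uq 2) (A$a$b) = 0" "ip (uq 3) (A$a$b) = 0"
          using z by auto
        then show ?thesis by (intro quat_eqI) (simp_all add: ip_uq_comp ip_uq1)
      next
        case False
        show ?thesis
        proof (cases "a = b")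
          case True
          then have "((a,b),q) \<in> I" if "1 \<le> q" "q < 4" for q using that by (auto simp: I_def D_def)
          then have "ip (uq 1) (A$a$b) = 0" "ip (uq 2) (A$a$b) = 0" "ip (uq 3) (A$a$b) = 0"
            using z by auto
          moreover have "A$a$b = - qcnj (A$a$b)" using antiherm_nth[OF A(1), of a a] True by simp
          then have "Re_q (A$a$b) = - Re_q (A$a$b)" by (metis quat_simps(17) quat_simps(25))
          ultimately show ?thesis by (intro quat_eqI) (simp_all add: ip_uq_comp ip_uq1)
        next
          case ne: False
          then have "h b < h a" using False f by (metis inj_eq linorder_neqE_nat)
          then have "((b,a),q) \<in> I" if "q < 4" for q using that by (auto simp: I_def P_def)
          then have "ip (uq 0) (A$b$a) = 0" "ip (uq 1) (A$b$a) = 0" "ip (uq 2) (A$b$a) = 0" "ip (uq 3) (A$b$a) = 0"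
            using z by auto
          then have "A$b$a = 0" by (intro quat_eqI) (simp_all add: ip_uq_comp ip_uq1)
          then show ?thesis using antiherm_nth[OF A(1), of a b] by simp
        qed
      qed
      then show ?thesis by (simp add: vec_eq_iff)
    qed
  qed
  also have "\<dots> = card I" using inj by (simp add: card_image)
  also have "card I = 4 * card P + 3 * card D"
  proof -
    have "P \<inter> D = {}" by (auto simp: P_def D_def)
    then have "(P \<times> {..<4::nat}) \<inter> (D \<times> {1..<4}) = {}" by auto
    then have "card I = card (P \<times> {..<4::nat}) + card (D \<times> {1..<4::nat})"
      unfolding I_def by (intro card_Un_disjoint) auto
    then show ?thesis by (simp add: card_cartesian_product)
  qed
  also have "card D = CARD('d)" unfolding D_def by (rule card_image) (auto simp: inj_on_def)
  also have "card P * 2 + CARD('d) = CARD('d) * CARD('d)"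
  proof -
    have U: "(UNIV :: ('d\<times>'d) set) = P \<union> (prod.swap ` P \<union> D)"
    proof -
      have "(a,b) \<in> P \<union> (prod.swap ` P \<union> D)" for a b
      proof (cases "a = b")
        case False
        then have "h a \<noteq> h b" using f by (meson injD)
        then show ?thesis by (cases "h a < h b") (auto simp: P_def D_def image_iff)
      qed (auto simp: D_def)
      then show ?thesis by (metis UNIV_eq_I prod.collapse)
    qed
    have d1: "prod.swap ` P \<inter> D = {}" by (auto simp: P_def D_def)
    have d2: "P \<inter> (prod.swap ` P \<union> D) = {}" by (auto simp: P_def D_def)
    have cs: "card (prod.swap ` P) = card P" by (rule card_image) (auto simp: inj_on_def)
    have "CARD('d \<times> 'd) = card P + (card (prod.swap ` P) + card D)"
      unfolding U using d1 d2 by (simp add: card_Un_disjoint)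
    moreover have "CARD('d \<times> 'd) = CARD('d) * CARD('d)" by (simp add: card_cartesian_product)
    moreover have "card D = CARD('d)" unfolding D_def by (rule card_image) (auto simp: inj_on_def)
    ultimately show ?thesis using cs by simp
  qed
  ultimately show ?thesis by (simp add: algebra_simps)
qed



lemma Re4: "Re_q (qcnj a * qcnj z * a * w) = ip z (a * w * qcnj a)"
proof -
  have "Re_q (qcnj a * qcnj z * a * w) = Re_q (qcnj a * (qcnj z * a * w))" by (simp add: mult.assoc)
  also have "\<dots> = Re_q ((qcnj z * a * w) * qcnj a)" by (rule Re_mult_comm)
  finally show ?thesis by (simp add: ip_def mult.assoc)
qed

lemma onb_expand:
  assumes onb: "onb_family minner 3 n S y" and k: "k < n" and A: "A \<in> S k"
  shows "A = (\<Sum>m<3. minner (y k m) A *\<^sub>R y k m)"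
proof -
  have orth: "\<And>i j. i < 3 \<Longrightarrow> j < 3 \<Longrightarrow> minner (y k i) (y k j) = (if i = j then 1 else 0)"
    and sp: "span {y k i | i. i < 3} = S k"
    using onb k unfolding onb_family_def by auto
  have Y: "{y k i | i. i < 3} = y k ` {..<3}" by auto
  have inj: "inj_on (y k) {..<3}"
  proof (rule inj_onI)
    fix i j assume "i \<in> {..<3::nat}" "j \<in> {..<3::nat}" "y k i = y k j"
    then show "i = j" using orth[of i i] orth[of i j] by (auto split: if_splits)
  qed
  have "A \<in> span (y k ` {..<3})" using A sp Y by simp
  then obtain u where "A = (\<Sum>v\<in>y k ` {..<3}. u v *\<^sub>R v)"
    using real_vector.span_finite[of "y k ` {..<3}"] by auto
  then have Ac: "A = (\<Sum>m<3. u (y k m) *\<^sub>R y k m)"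
    by (simp add: sum.reindex[OF inj])
  have c: "minner (y k j) A = u (y k j)" if "j < 3" for j
  proof -
    have "minner (y k j) A = (\<Sum>m<3. u (y k m) * minner (y k j) (y k m))"
      unfolding Ac by (simp add: minner_sum_right minner_scaleR_right)
    also have "\<dots> = (\<Sum>m<3. if m = j then u (y k j) else 0)"
      by (rule sum.cong) (use orth that in auto)
    also have "\<dots> = u (y k j)" using that by simp
    finally show ?thesis .
  qed
  show ?thesis unfolding Ac[symmetric] using c
    by (subst Ac) (intro sum.cong refl, simp)
qed

lemma parseval:
  assumes onb: "onb_family minner 3 n S y" and k: "k < n" and A: "A \<in> S k" and B: "B \<in> S k"
  shows "minner A B = (\<Sum>m<3. minner (y k m) A * minner (y k m) B)"
proof -
  have "minner A B = minner B A" by (rule minner_sym)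
  also have "\<dots> = minner B (\<Sum>m<3. minner (y k m) A *\<^sub>R y k m)"
    using onb_expand[OF onb k A] by simp
  also have "\<dots> = (\<Sum>m<3. minner (y k m) A * minner (y k m) B)"
    by (simp add: minner_sum_right minner_scaleR_right minner_sym[of B])
  finally show ?thesis .
qed

lemma gram_key:
  fixes x :: "nat \<Rightarrow> quat^'d"
  assumes unit: "\<forall>k<n. unit_vec (x k)"
    and onb: "onb_family minner 3 n (\<lambda>k. Ssub (x k)) y"
    and k: "k < n" and l: "l < n" and i: "i < 3" and j: "j < 3"
  shows "(\<Sum>m<3. gram_blk minner y k l m i * gram_blk minner y k l m j)
         = (qnorm2 (hinner (x k) (x l)))\<^sup>2 * (if i = j then 1 else 0)"
proof -
  have mem: "y k' i' \<in> Ssub (x k')" if "k' < n" "i' < 3" for k' i'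
    using onb that unfolding onb_family_def by auto
  define zz where "zz k' i' = (SOME z. y k' i' = outer (x k') z (x k') \<and> Re_q z = 0)" for k' i'
  have zz: "y k' i' = outer (x k') (zz k' i') (x k') \<and> Re_q (zz k' i') = 0" if "k' < n" "i' < 3" for k' i'
  proof -
    have "\<exists>z. y k' i' = outer (x k') z (x k') \<and> Re_q z = 0" using mem[OF that] by (auto simp: Ssub_def)
    then show ?thesis unfolding zz_def by (rule someI_ex)
  qed
  define a where "a = hinner (x k) (x l)"
  define C where "C i' = outer (x k) (a * zz l i' * qcnj a) (x k)" for i'
  have uk: "unit_vec (x k)" using unit k by auto
  have ul: "unit_vec (x l)" using unit l by auto
  have CS: "C i' \<in> Ssub (x k)" if "i' < 3" for i'
    unfolding C_def Ssub_def using zz[OF l that] by (auto simp: Re_conj3)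
  have g: "gram_blk minner y k l m i' = minner (y k m) (C i')" if "m < 3" "i' < 3" for m i'
  proof -
    have "gram_blk minner y k l m i' = minner (outer (x k) (zz k m) (x k)) (outer (x l) (zz l i') (x l))"
      unfolding gram_blk_def using zz[OF k that(1)] zz[OF l that(2)] by simp
    also have "\<dots> = ip (zz k m) (a * zz l i' * qcnj a)" by (simp add: minner_outer Re4 a_def)
    also have "\<dots> = minner (y k m) (C i')"
      unfolding C_def using zz[OF k that(1)] minner_outer_same[OF uk] by simp
    finally show ?thesis .
  qed
  have "(\<Sum>m<3. gram_blk minner y k l m i * gram_blk minner y k l m j)
      = (\<Sum>m<3. minner (y k m) (C i) * minner (y k m) (C j))"
    by (rule sum.cong) (simp_all add: g i j)
  also have "\<dots> = minner (C i) (C j)" using parseval[OF onb k CS[OF i] CS[OF j]] by simp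
  also have "\<dots> = ip (a * zz l i * qcnj a) (a * zz l j * qcnj a)"
    unfolding C_def by (rule minner_outer_same[OF uk])
  also have "\<dots> = (qnorm2 a)\<^sup>2 * ip (zz l i) (zz l j)" by (rule ip_conj3)
  also have "ip (zz l i) (zz l j) = minner (y l i) (y l j)"
    using zz[OF l i] zz[OF l j] minner_outer_same[OF ul] by simp
  also have "\<dots> = (if i = j then 1 else 0)" using onb l i j unfolding onb_family_def by auto
  finally show ?thesis unfolding a_def .
qed

lemma minner_proj: "minner (proj x) (proj y) = qnorm2 (hinner x y)"
  by (simp add: proj_def minner_outer qcnj_mult_self)

theorem mainTheorem16:
  fixes n :: nat and x :: "nat \<Rightarrow> quat^'d"
  assumes unit: "\<forall>k<n. unit_vec (x k)"
  shows "(equiangular n x \<longrightarrow>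
            equi_isoclinic (antiherm :: (quat^'d^'d) set) minner 3 n (\<lambda>k. Ssub (x k)))
       \<and> (proj_2design n x \<longrightarrow>
            tight_fusion_frame (antiherm :: (quat^'d^'d) set) minner 3 n (\<lambda>k. Ssub (x k)))"
proof -
  have sf: "subspace_family (antiherm :: (quat^'d^'d) set) 3 n (\<lambda>k. Ssub (x k))"
    unfolding subspace_family_def using unit subspace_Ssub Ssub_antiherm dim_Ssub by blast
  have A: "equi_isoclinic (antiherm :: (quat^'d^'d) set) minner 3 n (\<lambda>k. Ssub (x k))"
    if eq: "equiangular n x"
  proof -
    obtain c where c: "\<And>k l. k < n \<Longrightarrow> l < n \<Longrightarrow> k \<noteq> l \<Longrightarrow> qnorm2 (hinner (x k) (x l)) = c"
      using eq unfolding equiangular_def by blast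
    show ?thesis unfolding equi_isoclinic_def
    proof (intro conjI sf allI impI)
      fix y assume onb: "onb_family minner 3 n (\<lambda>k. Ssub (x k)) y"
      show "\<exists>\<alpha>\<ge>0. \<forall>k<n. \<forall>l<n. k \<noteq> l \<longrightarrow> (\<forall>i<3. \<forall>j<3.
              (\<Sum>m<3. gram_blk minner y k l m i * gram_blk minner y k l m j) = (if i = j then \<alpha> else 0))"
        by (rule exI[of _ "c\<^sup>2"]) (auto simp: gram_key[OF unit onb] c)
    qed
  qed
  have B: "tight_fusion_frame (antiherm :: (quat^'d^'d) set) minner 3 n (\<lambda>k. Ssub (x k))"
    if des: "proj_2design n x"
  proof -
    have d2: "(1 / (real n)\<^sup>2) * (\<Sum>k<n. \<Sum>l<n. (minner (proj (x k)) (proj (x l)))\<^sup>2)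
        = 3 / (real CARD('d) * (2 * real CARD('d) + 1))"
      using des unfolding proj_2design_def by blast
    show ?thesis unfolding tight_fusion_frame_def
    proof (intro conjI sf allI impI)
      fix y assume onb: "onb_family minner 3 n (\<lambda>k. Ssub (x k)) y"
      have inner: "(\<Sum>i<3. \<Sum>j<3. (gram_blk minner y k l i j)\<^sup>2) = 3 * (minner (proj (x k)) (proj (x l)))\<^sup>2"
        if "k < n" "l < n" for k l
      proof -
        have "(\<Sum>i<3. \<Sum>j<3. (gram_blk minner y k l i j)\<^sup>2)
            = (\<Sum>j<3. \<Sum>i<3. gram_blk minner y k l i j * gram_blk minner y k l i j)"
          by (subst sum.swap) (simp add: power2_eq_square)
        also have "\<dots> = (\<Sum>j<(3::nat). (qnorm2 (hinner (x k) (x l)))\<^sup>2)"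
          by (rule sum.cong) (simp_all add: gram_key[OF unit onb that])
        finally show ?thesis by (simp add: minner_proj)
      qed
      have "(\<Sum>k<n. \<Sum>l<n. \<Sum>i<3. \<Sum>j<3. (gram_blk minner y k l i j)\<^sup>2)
          = 3 * (\<Sum>k<n. \<Sum>l<n. (minner (proj (x k)) (proj (x l)))\<^sup>2)"
        by (simp add: inner sum_distrib_left)
      then have "(1 / (real n)\<^sup>2) * (\<Sum>k<n. \<Sum>l<n. \<Sum>i<3. \<Sum>j<3. (gram_blk minner y k l i j)\<^sup>2)
          = 3 * (3 / (real CARD('d) * (2 * real CARD('d) + 1)))"
        using d2 by (simp add: algebra_simps)
      also have "\<dots> = (real 3)\<^sup>2 / real (dim (antiherm :: (quat^'d^'d) set))"
        by (simp add: dim_antiherm algebra_simps)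
      finally show "(1 / (real n)\<^sup>2) * (\<Sum>k<n. \<Sum>l<n. \<Sum>i<3. \<Sum>j<3. (gram_blk minner y k l i j)\<^sup>2)
          = (real 3)\<^sup>2 / real (dim (antiherm :: (quat^'d^'d) set))" .
    qed
  qed
  show ?thesis using A B by blast
qed


end
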